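(* Let $G$ be a finite group and $N$ a normal subgroup with $1<N<G$ such that every $x\in G\setminus N$ is conjugate in $G$ to every element of $xN$ (i.e. $(G,N)$ is a Camina pair). Let $A=\{\chi_1,\dots,\chi_n\}$ be a set of non-trivial irreducible characters of $G$ such that (i) each $\chi_i$ vanishes on $G\setminus N$, and (ii) there exist positive integers $\alpha_1,\dots,\alpha_n$ such that $\sum_{i=1}^n\alpha_i\chi_i$ is constant on $N\setminus\{1\}$. Then $A=\mathrm{Irr}(G\mid N)$.
   Context: $\mathrm{Irr}(G)$ denotes the set of complex irreducible characters of $G$, and $\mathrm{Irr}(G\mid N)=\{\chi\in\mathrm{Irr}(G)\mid N\not\le\ker\chi\}$. *)

theory Defs
  imports "HOL-Algebra.Group" "HOL-Algebra.Coset" "Jordan_Normal_Form.Matrix"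
begin

definition is_rep :: "('a, 'b) monoid_scheme \<Rightarrow> nat \<Rightarrow> ('a \<Rightarrow> complex mat) \<Rightarrow> bool" where
  "is_rep G n \<rho> \<longleftrightarrow>
     (\<forall>g\<in>carrier G. \<rho> g \<in> carrier_mat n n) \<and>
     (\<forall>g\<in>carrier G. \<forall>h\<in>carrier G. \<rho> (g \<otimes>\<^bsub>G\<^esub> h) = \<rho> g * \<rho> h) \<and>
     \<rho> \<one>\<^bsub>G\<^esub> = 1\<^sub>m n"

definition is_subspace :: "nat \<Rightarrow> complex vec set \<Rightarrow> bool" where
  "is_subspace n W \<longleftrightarrow> W \<subseteq> carrier_vec n \<and> 0\<^sub>v n \<in> W \<and>
     (\<forall>v\<in>W. \<forall>w\<in>W. v + w \<in> W) \<and> (\<forall>c. \<forall>v\<in>W. c \<cdot>\<^sub>v v \<in> W)"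

definition irreducible_rep :: "('a, 'b) monoid_scheme \<Rightarrow> nat \<Rightarrow> ('a \<Rightarrow> complex mat) \<Rightarrow> bool" where
  "irreducible_rep G n \<rho> \<longleftrightarrow> is_rep G n \<rho> \<and> n > 0 \<and>
     (\<forall>W. is_subspace n W \<and> (\<forall>g\<in>carrier G. \<forall>w\<in>W. \<rho> g *\<^sub>v w \<in> W)
          \<longrightarrow> W = {0\<^sub>v n} \<or> W = carrier_vec n)"

definition mat_trace :: "complex mat \<Rightarrow> complex" where
  "mat_trace M = (\<Sum>i<dim_row M. M $$ (i, i))"

definition character_of :: "('a, 'b) monoid_scheme \<Rightarrow> ('a \<Rightarrow> complex mat) \<Rightarrow> 'a \<Rightarrow> complex" where
  "character_of G \<rho> = (\<lambda>g. if g \<in> carrier G then mat_trace (\<rho> g) else 0)"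

definition Irr :: "('a, 'b) monoid_scheme \<Rightarrow> ('a \<Rightarrow> complex) set" where
  "Irr G = {\<chi>. \<exists>n \<rho>. irreducible_rep G n \<rho> \<and> \<chi> = character_of G \<rho>}"

definition principal_char :: "('a, 'b) monoid_scheme \<Rightarrow> 'a \<Rightarrow> complex" where
  "principal_char G = (\<lambda>g. if g \<in> carrier G then 1 else 0)"

definition char_ker :: "('a, 'b) monoid_scheme \<Rightarrow> ('a \<Rightarrow> complex) \<Rightarrow> 'a set" where
  "char_ker G \<chi> = {g \<in> carrier G. \<chi> g = \<chi> \<one>\<^bsub>G\<^esub>}"

definition Irr_rel :: "('a, 'b) monoid_scheme \<Rightarrow> 'a set \<Rightarrow> ('a \<Rightarrow> complex) set" where
  "Irr_rel G N = {\<chi> \<in> Irr G. \<not> N \<subseteq> char_ker G \<chi>}"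

definition camina_pair :: "('a, 'b) monoid_scheme \<Rightarrow> 'a set \<Rightarrow> bool" where
  "camina_pair G N \<longleftrightarrow> N \<lhd> G \<and> N \<noteq> {\<one>\<^bsub>G\<^esub>} \<and> N \<noteq> carrier G \<and>
     (\<forall>x\<in>carrier G - N. \<forall>m\<in>N. \<exists>g\<in>carrier G.
        g \<otimes>\<^bsub>G\<^esub> x \<otimes>\<^bsub>G\<^esub> inv\<^bsub>G\<^esub> g = x \<otimes>\<^bsub>G\<^esub> m)"

end

theory Submission imports Defs "Jordan_Normal_Form.Spectral_Radius" begin

lemma mult_entry:
  fixes A :: "complex mat"
  assumes "A \<in> carrier_mat n k" "B \<in> carrier_mat k m" "i < n" "j < m"
  shows "(A * B) $$ (i,j) = (\<Sum>t\<in>{0..<k}. A $$ (i,t) * B $$ (t,j))"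
  using assms by (auto simp: scalar_prod_def)

lemma mult_vec_entry:
  fixes A :: "complex mat"
  assumes "A \<in> carrier_mat n k" "v \<in> carrier_vec k" "i < n"
  shows "(A *\<^sub>v v) $ i = (\<Sum>t\<in>{0..<k}. A $$ (i,t) * v $ t)"
  using assms by (auto simp: scalar_prod_def)

lemma mat_unit_entry:
  fixes A :: "complex mat"
  assumes "A \<in> carrier_mat n m" "i < n" "j < m"
  shows "(A *\<^sub>v unit_vec m j) $ i = A $$ (i,j)"
proof -
  have "(A *\<^sub>v unit_vec m j) $ i = (\<Sum>t\<in>{0..<m}. A $$ (i,t) * unit_vec m j $ t)"
    using assms by (intro mult_vec_entry) auto
  also have "\<dots> = (\<Sum>t\<in>{0..<m}. if t = j then A $$ (i,t) else 0)"
    by (intro sum.cong) (auto simp: unit_vec_def)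
  also have "\<dots> = A $$ (i,j)" using assms by (simp add: sum.delta')
  finally show ?thesis .
qed

lemma mat_eq_by_vec:
  fixes A :: "complex mat"
  assumes "A \<in> carrier_mat n m" "B \<in> carrier_mat n m"
    "\<And>v. v \<in> carrier_vec m \<Longrightarrow> A *\<^sub>v v = B *\<^sub>v v"
  shows "A = B"
proof (rule eq_matI)
  fix i j assume "i < dim_row B" "j < dim_col B"
  then have ij: "i < n" "j < m" using assms by auto
  have "A $$ (i,j) = (A *\<^sub>v unit_vec m j) $ i" using mat_unit_entry assms ij by metis
  also have "\<dots> = (B *\<^sub>v unit_vec m j) $ i" using assms(3) by simp
  also have "\<dots> = B $$ (i,j)" using mat_unit_entry assms ij by metis
  finally show "A $$ (i,j) = B $$ (i,j)" .
qed (use assms in auto)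

lemma mat_zero_vec:
  fixes T :: "complex mat"
  assumes "T \<in> carrier_mat n m" shows "T *\<^sub>v 0\<^sub>v m = 0\<^sub>v n"
  using assms by (intro eq_vecI) (auto simp: mult_vec_entry)

lemma image_subspace:
  fixes T :: "complex mat"
  assumes T: "T \<in> carrier_mat n m"
  shows "is_subspace n ((\<lambda>v. T *\<^sub>v v) ` carrier_vec m)"
  unfolding is_subspace_def
proof (intro conjI ballI allI)
  show "(\<lambda>v. T *\<^sub>v v) ` carrier_vec m \<subseteq> carrier_vec n" using T by auto
  show "0\<^sub>v n \<in> (\<lambda>v. T *\<^sub>v v) ` carrier_vec m"
    using mat_zero_vec[OF T] by (metis image_eqI zero_carrier_vec)
  fix v w assume v: "v \<in> (\<lambda>v. T *\<^sub>v v) ` carrier_vec m" and w: "w \<in> (\<lambda>v. T *\<^sub>v v) ` carrier_vec m"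
  then obtain a b where a: "a \<in> carrier_vec m" "v = T *\<^sub>v a" and b: "b \<in> carrier_vec m" "w = T *\<^sub>v b" by auto
  have "v + w = T *\<^sub>v (a + b)" using a b T by (simp add: mult_add_distrib_mat_vec)
  then show "v + w \<in> (\<lambda>v. T *\<^sub>v v) ` carrier_vec m" using a b by auto
next
  fix c v assume v: "v \<in> (\<lambda>v. T *\<^sub>v v) ` carrier_vec m"
  then obtain a where a: "a \<in> carrier_vec m" "v = T *\<^sub>v a" by auto
  have "c \<cdot>\<^sub>v v = T *\<^sub>v (c \<cdot>\<^sub>v a)" using a T by (simp add: mult_mat_vec)
  then show "c \<cdot>\<^sub>v v \<in> (\<lambda>v. T *\<^sub>v v) ` carrier_vec m" using a by auto
qed

lemma kernel_subspace:
  fixes T :: "complex mat"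
  assumes T: "T \<in> carrier_mat n m"
  shows "is_subspace m {v \<in> carrier_vec m. T *\<^sub>v v = 0\<^sub>v n}"
  unfolding is_subspace_def
proof (intro conjI ballI allI)
  show "0\<^sub>v m \<in> {v \<in> carrier_vec m. T *\<^sub>v v = 0\<^sub>v n}" using mat_zero_vec[OF T] by auto
  fix v w assume "v \<in> {v \<in> carrier_vec m. T *\<^sub>v v = 0\<^sub>v n}" "w \<in> {v \<in> carrier_vec m. T *\<^sub>v v = 0\<^sub>v n}"
  then show "v + w \<in> {v \<in> carrier_vec m. T *\<^sub>v v = 0\<^sub>v n}" using T by (simp add: mult_add_distrib_mat_vec)
next
  fix c v assume "v \<in> {v \<in> carrier_vec m. T *\<^sub>v v = 0\<^sub>v n}"
  then have v: "v \<in> carrier_vec m" "T *\<^sub>v v = 0\<^sub>v n" by auto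
  have "T *\<^sub>v (c \<cdot>\<^sub>v v) = c \<cdot>\<^sub>v (T *\<^sub>v v)" using T v by (simp add: mult_mat_vec)
  also have "\<dots> = 0\<^sub>v n" unfolding v(2) by (intro eq_vecI) auto
  finally show "c \<cdot>\<^sub>v v \<in> {v \<in> carrier_vec m. T *\<^sub>v v = 0\<^sub>v n}" using v by auto
qed auto

lemma rep_carrier: "is_rep G n \<rho> \<Longrightarrow> g \<in> carrier G \<Longrightarrow> \<rho> g \<in> carrier_mat n n"
  by (simp add: is_rep_def)
lemma rep_mult: "is_rep G n \<rho> \<Longrightarrow> g \<in> carrier G \<Longrightarrow> h \<in> carrier G \<Longrightarrow> \<rho> (g \<otimes>\<^bsub>G\<^esub> h) = \<rho> g * \<rho> h"
  by (simp add: is_rep_def)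
lemma rep_one: "is_rep G n \<rho> \<Longrightarrow> \<rho> \<one>\<^bsub>G\<^esub> = 1\<^sub>m n"
  by (simp add: is_rep_def)

lemma mat_trace_one: "mat_trace (1\<^sub>m n) = of_nat n"
  by (simp add: mat_trace_def)

lemma char_one: "group G \<Longrightarrow> is_rep G n \<rho> \<Longrightarrow> character_of G \<rho> \<one>\<^bsub>G\<^esub> = of_nat n"
  by (simp add: character_of_def rep_one mat_trace_one group.is_monoid monoid.one_closed)

lemma (in group) cancel_l [simp]: "x \<in> carrier G \<Longrightarrow> y \<in> carrier G \<Longrightarrow> inv x \<otimes> (x \<otimes> y) = y"
  by (simp add: m_assoc[symmetric])
lemma (in group) cancel_l2 [simp]: "x \<in> carrier G \<Longrightarrow> y \<in> carrier G \<Longrightarrow> x \<otimes> (inv x \<otimes> y) = y"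
  by (simp add: m_assoc[symmetric])

lemma sum_left_mult_reindex:
  fixes G (structure)
  assumes "group G" "subgroup H G" "h \<in> H"
  shows "(\<Sum>x\<in>H. f (h \<otimes> x)) = (\<Sum>x\<in>H. f x)"
proof -
  interpret group G by fact
  have HG: "H \<subseteq> carrier G" using assms(2) subgroup.subset by blast
  have hG: "h \<in> carrier G" using assms HG by blast
  have "bij_betw (\<lambda>x. h \<otimes> x) H H"
  proof (rule bij_betwI[where g="\<lambda>x. inv h \<otimes> x"])
    show "(\<lambda>x. h \<otimes> x) \<in> H \<rightarrow> H" using assms subgroup.m_closed by (metis Pi_I)
    show "(\<lambda>x. inv h \<otimes> x) \<in> H \<rightarrow> H" using assms subgroup.m_closed subgroup.m_inv_closed by (metis Pi_I)
    show "\<And>x. x \<in> H \<Longrightarrow> inv h \<otimes> (h \<otimes> x) = x" using HG hG by (simp add: subsetD)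
    show "\<And>x. x \<in> H \<Longrightarrow> h \<otimes> (inv h \<otimes> x) = x" using HG hG by (simp add: subsetD)
  qed
  then show ?thesis by (rule sum.reindex_bij_betw)
qed

lemma sum_conj_reindex:
  fixes G (structure)
  assumes "group G" "H \<lhd> G" "g \<in> carrier G"
  shows "(\<Sum>x\<in>H. f (g \<otimes> x \<otimes> inv g)) = (\<Sum>x\<in>H. f x)"
proof -
  interpret group G by fact
  interpret normal H G by fact
  have HG: "H \<subseteq> carrier G" by (rule subset)
  have g: "g \<in> carrier G" "inv g \<in> carrier G" using assms(3) by auto
  have "bij_betw (\<lambda>x. g \<otimes> x \<otimes> inv g) H H"
  proof (rule bij_betwI[where g="\<lambda>x. inv g \<otimes> x \<otimes> g"])
    show "(\<lambda>x. g \<otimes> x \<otimes> inv g) \<in> H \<rightarrow> H" using g inv_op_closed2 by (simp add: Pi_iff)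
    show "(\<lambda>x. inv g \<otimes> x \<otimes> g) \<in> H \<rightarrow> H" using g inv_op_closed1 by (simp add: Pi_iff)
    fix x assume "x \<in> H"
    then have x: "x \<in> carrier G" using HG by blast
    show "inv g \<otimes> (g \<otimes> x \<otimes> inv g) \<otimes> g = x" using x g by (simp add: m_assoc)
    show "g \<otimes> (inv g \<otimes> x \<otimes> g) \<otimes> inv g = x" using x g by (simp add: m_assoc)
  qed
  then show ?thesis by (rule sum.reindex_bij_betw)
qed

lemma sum_inv_reindex:
  fixes G (structure)
  assumes "group G" "subgroup H G"
  shows "(\<Sum>x\<in>H. f (inv x)) = (\<Sum>x\<in>H. f x)"
proof -
  interpret group G by fact
  have HG: "H \<subseteq> carrier G" using assms(2) subgroup.subset by blast
  have "bij_betw (\<lambda>x. inv x) H H"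
  proof (rule bij_betwI[where g="\<lambda>x. inv x"])
    show "(\<lambda>x. inv x) \<in> H \<rightarrow> H" using assms subgroup.m_inv_closed by (metis Pi_I)
    then show "(\<lambda>x. inv x) \<in> H \<rightarrow> H" .
    fix x assume "x \<in> H"
    then have x: "x \<in> carrier G" using HG by blast
    show "inv (inv x) = x" using x by simp
    show "inv (inv x) = x" using x by simp
  qed
  then show ?thesis by (rule sum.reindex_bij_betw)
qed

lemma zero_mat_vec: "v \<in> carrier_vec m \<Longrightarrow> (0\<^sub>m n m :: complex mat) *\<^sub>v v = 0\<^sub>v n"
  by (intro eq_vecI) (auto simp: mult_vec_entry)

lemma smult_one_mat_vec:
  assumes "(v :: complex vec) \<in> carrier_vec n"
  shows "(c \<cdot>\<^sub>m 1\<^sub>m n) *\<^sub>v v = c \<cdot>\<^sub>v v"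
proof (rule eq_vecI)
  fix i assume "i < dim_vec (c \<cdot>\<^sub>v v)"
  then have i: "i < n" using assms by auto
  have "((c \<cdot>\<^sub>m 1\<^sub>m n) *\<^sub>v v) $ i = (\<Sum>t\<in>{0..<n}. (c \<cdot>\<^sub>m 1\<^sub>m n) $$ (i,t) * v $ t)"
    using assms i by (intro mult_vec_entry) auto
  also have "\<dots> = (\<Sum>t\<in>{0..<n}. if t = i then c * v $ t else 0)"
    using i by (intro sum.cong) auto
  also have "\<dots> = c * v $ i" using i by (simp add: sum.delta')
  finally show "((c \<cdot>\<^sub>m 1\<^sub>m n) *\<^sub>v v) $ i = (c \<cdot>\<^sub>v v) $ i" using i assms by simp
qed (use assms in auto)

lemma trace_comm:
  fixes A B :: "complex mat"
  assumes A: "A \<in> carrier_mat n m" and B: "B \<in> carrier_mat m n"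
  shows "mat_trace (A * B) = mat_trace (B * A)"
proof -
  have e: "\<And>i. i \<in> {..<n} \<Longrightarrow> (A * B) $$ (i,i) = (\<Sum>t\<in>{0..<m}. A $$ (i,t) * B $$ (t,i))"
    using mult_entry[OF A B] by blast
  have "mat_trace (A * B) = (\<Sum>i<n. (A * B) $$ (i,i))" unfolding mat_trace_def using A by simp
  also have "\<dots> = (\<Sum>i<n. \<Sum>t\<in>{0..<m}. A $$ (i,t) * B $$ (t,i))"
    by (rule sum.cong[OF refl e])
  also have "\<dots> = (\<Sum>t\<in>{0..<m}. \<Sum>i<n. B $$ (t,i) * A $$ (i,t))"
    by (subst sum.swap) (simp add: mult.commute)
  also have "\<dots> = mat_trace (B * A)"
  proof -
    have "\<And>t. t \<in> {0..<m} \<Longrightarrow> (\<Sum>i<n. B $$ (t,i) * A $$ (i,t)) = (B * A) $$ (t,t)"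
      using mult_entry[OF B A] by (simp add: atLeast0LessThan)
    then have "(\<Sum>t\<in>{0..<m}. \<Sum>i<n. B $$ (t,i) * A $$ (i,t)) = (\<Sum>t\<in>{0..<m}. (B * A) $$ (t,t))"
      by (rule sum.cong[OF refl])
    also have "\<dots> = mat_trace (B * A)" unfolding mat_trace_def using B by (simp add: atLeast0LessThan)
    finally show ?thesis .
  qed
  finally show ?thesis .
qed

lemma rep_sum_left:
  fixes G (structure)
  assumes rep: "is_rep G n \<rho>" and HG: "H \<subseteq> carrier G" and g: "g \<in> carrier G" and i: "i < n" and j: "j < n"
  shows "(\<rho> g * mat n n (\<lambda>(i,j). \<Sum>h\<in>H. \<rho> h $$ (i,j))) $$ (i,j) = (\<Sum>h\<in>H. \<rho> (g \<otimes> h) $$ (i,j))"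
proof -
  let ?P = "mat n n (\<lambda>(i,j). \<Sum>h\<in>H. \<rho> h $$ (i,j))"
  have rc: "\<rho> g \<in> carrier_mat n n" using rep g by (rule rep_carrier)
  have "(\<rho> g * ?P) $$ (i,j) = (\<Sum>t\<in>{0..<n}. \<rho> g $$ (i,t) * ?P $$ (t,j))"
    using rc i j by (intro mult_entry) auto
  also have "\<dots> = (\<Sum>t\<in>{0..<n}. \<Sum>h\<in>H. \<rho> g $$ (i,t) * \<rho> h $$ (t,j))"
    using j by (intro sum.cong) (auto simp: sum_distrib_left)
  also have "\<dots> = (\<Sum>h\<in>H. \<Sum>t\<in>{0..<n}. \<rho> g $$ (i,t) * \<rho> h $$ (t,j))"
    by (rule sum.swap)
  also have "\<dots> = (\<Sum>h\<in>H. \<rho> (g \<otimes> h) $$ (i,j))"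
  proof (intro sum.cong refl)
    fix h assume "h \<in> H"
    then have h: "h \<in> carrier G" using HG by blast
    show "(\<Sum>t\<in>{0..<n}. \<rho> g $$ (i,t) * \<rho> h $$ (t,j)) = \<rho> (g \<otimes> h) $$ (i,j)"
      using rep_mult[OF rep g h] mult_entry[OF rc rep_carrier[OF rep h] i j] by simp
  qed
  finally show ?thesis .
qed

lemma rep_sum_right:
  fixes G (structure)
  assumes rep: "is_rep G n \<rho>" and HG: "H \<subseteq> carrier G" and g: "g \<in> carrier G" and i: "i < n" and j: "j < n"
  shows "(mat n n (\<lambda>(i,j). \<Sum>h\<in>H. \<rho> h $$ (i,j)) * \<rho> g) $$ (i,j) = (\<Sum>h\<in>H. \<rho> (h \<otimes> g) $$ (i,j))"
proof -
  let ?P = "mat n n (\<lambda>(i,j). \<Sum>h\<in>H. \<rho> h $$ (i,j))"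
  have rc: "\<rho> g \<in> carrier_mat n n" using rep g by (rule rep_carrier)
  have "(?P * \<rho> g) $$ (i,j) = (\<Sum>t\<in>{0..<n}. ?P $$ (i,t) * \<rho> g $$ (t,j))"
    using rc i j by (intro mult_entry) auto
  also have "\<dots> = (\<Sum>t\<in>{0..<n}. \<Sum>h\<in>H. \<rho> h $$ (i,t) * \<rho> g $$ (t,j))"
    using i by (intro sum.cong) (auto simp: sum_distrib_right)
  also have "\<dots> = (\<Sum>h\<in>H. \<Sum>t\<in>{0..<n}. \<rho> h $$ (i,t) * \<rho> g $$ (t,j))"
    by (rule sum.swap)
  also have "\<dots> = (\<Sum>h\<in>H. \<rho> (h \<otimes> g) $$ (i,j))"
  proof (intro sum.cong refl)
    fix h assume "h \<in> H"
    then have h: "h \<in> carrier G" using HG by blast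
    show "(\<Sum>t\<in>{0..<n}. \<rho> h $$ (i,t) * \<rho> g $$ (t,j)) = \<rho> (h \<otimes> g) $$ (i,j)"
      using rep_mult[OF rep h g] mult_entry[OF rep_carrier[OF rep h] rc i j] by simp
  qed
  finally show ?thesis .
qed

lemma normal_fixed:
  fixes G (structure)
  assumes grp: "group G" and fin: "finite (carrier G)" and nH: "H \<lhd> G"
    and irr: "irreducible_rep G n \<rho>"
  shows "(\<Sum>h\<in>H. mat_trace (\<rho> h)) = 0 \<or> (\<forall>h\<in>H. \<rho> h = 1\<^sub>m n)"
proof -
  interpret group G by fact
  interpret normal H G by fact
  have rep: "is_rep G n \<rho>" using irr by (simp add: irreducible_rep_def)
  have HG: "H \<subseteq> carrier G" by (rule subset)
  have sH: "subgroup H G" by (rule subgroup_axioms)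
  define P where "P = mat n n (\<lambda>(i,j). \<Sum>h\<in>H. \<rho> h $$ (i,j))"
  have Pc: "P \<in> carrier_mat n n" unfolding P_def by simp
  have Pent: "\<And>i j. i < n \<Longrightarrow> j < n \<Longrightarrow> P $$ (i,j) = (\<Sum>h\<in>H. \<rho> h $$ (i,j))"
    unfolding P_def by simp
  have PH: "\<rho> h * P = P" if h: "h \<in> H" for h
  proof -
    have hG: "h \<in> carrier G" using h HG by (rule subsetD[rotated])
    have rc: "\<rho> h \<in> carrier_mat n n" by (rule rep_carrier[OF rep hG])
    show ?thesis
    proof (rule eq_matI)
      fix i j assume "i < dim_row P" "j < dim_col P"
      then have ij: "i < n" "j < n" using Pc by auto
      have "(\<rho> h * P) $$ (i,j) = (\<Sum>x\<in>H. \<rho> (h \<otimes> x) $$ (i,j))"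
        unfolding P_def by (rule rep_sum_left[OF rep HG hG ij])
      also have "\<dots> = (\<Sum>x\<in>H. \<rho> x $$ (i,j))"
        by (rule sum_left_mult_reindex[OF grp sH h])
      finally show "(\<rho> h * P) $$ (i,j) = P $$ (i,j)" using Pent[OF ij] by simp
    next
      show "dim_row (\<rho> h * P) = dim_row P" using rc Pc by simp
      show "dim_col (\<rho> h * P) = dim_col P" using rc Pc by simp
    qed
  qed
  have PG: "\<rho> g * P = P * \<rho> g" if g: "g \<in> carrier G" for g
  proof -
    have rc: "\<rho> g \<in> carrier_mat n n" by (rule rep_carrier[OF rep g])
    show ?thesis
    proof (rule eq_matI)
      fix i j assume "i < dim_row (P * \<rho> g)" "j < dim_col (P * \<rho> g)"
      then have ij: "i < n" "j < n" using Pc rc by auto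
      have "(\<rho> g * P) $$ (i,j) = (\<Sum>x\<in>H. \<rho> (g \<otimes> x) $$ (i,j))"
        unfolding P_def by (rule rep_sum_left[OF rep HG g ij])
      also have "\<dots> = (\<Sum>x\<in>H. \<rho> ((g \<otimes> x \<otimes> inv g) \<otimes> g) $$ (i,j))"
      proof (rule sum.cong[OF refl])
        fix x assume "x \<in> H" then have x: "x \<in> carrier G" using HG by (rule subsetD[rotated])
        have "(g \<otimes> x \<otimes> inv g) \<otimes> g = g \<otimes> x" using x g by (simp add: m_assoc)
        then show "\<rho> (g \<otimes> x) $$ (i,j) = \<rho> ((g \<otimes> x \<otimes> inv g) \<otimes> g) $$ (i,j)" by simp
      qed
      also have "\<dots> = (\<Sum>x\<in>H. \<rho> (x \<otimes> g) $$ (i,j))"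
        by (rule sum_conj_reindex[OF grp nH g, where f="\<lambda>y. \<rho> (y \<otimes> g) $$ (i,j)"])
      also have "\<dots> = (P * \<rho> g) $$ (i,j)"
        unfolding P_def by (rule rep_sum_right[OF rep HG g ij, symmetric])
      finally show "(\<rho> g * P) $$ (i,j) = (P * \<rho> g) $$ (i,j)" .
    next
      show "dim_row (\<rho> g * P) = dim_row (P * \<rho> g)" using rc Pc by simp
      show "dim_col (\<rho> g * P) = dim_col (P * \<rho> g)" using rc Pc by simp
    qed
  qed
  define W where "W = (\<lambda>v. P *\<^sub>v v) ` carrier_vec n"
  have Wsub: "is_subspace n W" unfolding W_def by (rule image_subspace[OF Pc])
  have Winv: "\<forall>g\<in>carrier G. \<forall>w\<in>W. \<rho> g *\<^sub>v w \<in> W"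
  proof (intro ballI)
    fix g w assume g: "g \<in> carrier G" and "w \<in> W"
    then obtain v where v: "v \<in> carrier_vec n" "w = P *\<^sub>v v" unfolding W_def by auto
    have rc: "\<rho> g \<in> carrier_mat n n" by (rule rep_carrier[OF rep g])
    have "\<rho> g *\<^sub>v w = (\<rho> g * P) *\<^sub>v v" using v rc Pc by simp
    also have "\<dots> = P *\<^sub>v (\<rho> g *\<^sub>v v)" using PG[OF g] v rc Pc by simp
    finally show "\<rho> g *\<^sub>v w \<in> W" unfolding W_def using v rc by auto
  qed
  have irrW: "\<forall>W. is_subspace n W \<and> (\<forall>g\<in>carrier G. \<forall>w\<in>W. \<rho> g *\<^sub>v w \<in> W)
          \<longrightarrow> W = {0\<^sub>v n} \<or> W = carrier_vec n"
    using irr by (simp add: irreducible_rep_def)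
  have "W = {0\<^sub>v n} \<or> W = carrier_vec n"
    using irrW[rule_format, OF conjI[OF Wsub Winv]] .
  then show ?thesis
  proof
    assume W0: "W = {0\<^sub>v n}"
    have P0: "P = 0\<^sub>m n n"
    proof (rule mat_eq_by_vec[OF Pc])
      fix v :: "complex vec" assume v: "v \<in> carrier_vec n"
      then have "P *\<^sub>v v \<in> W" unfolding W_def by auto
      then show "P *\<^sub>v v = 0\<^sub>m n n *\<^sub>v v" using W0 zero_mat_vec[OF v] by simp
    qed auto
    have "(\<Sum>h\<in>H. mat_trace (\<rho> h)) = (\<Sum>h\<in>H. \<Sum>i<n. \<rho> h $$ (i,i))"
    proof (rule sum.cong[OF refl])
      fix h assume "h \<in> H" then have "h \<in> carrier G" using HG by (rule subsetD[rotated])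
      then have "\<rho> h \<in> carrier_mat n n" by (rule rep_carrier[OF rep])
      then show "mat_trace (\<rho> h) = (\<Sum>i<n. \<rho> h $$ (i,i))" unfolding mat_trace_def by simp
    qed
    also have "\<dots> = (\<Sum>i<n. \<Sum>h\<in>H. \<rho> h $$ (i,i))" by (rule sum.swap)
    also have "\<dots> = (\<Sum>i<n. P $$ (i,i))"
      by (rule sum.cong[OF refl]) (simp add: Pent)
    also have "\<dots> = 0" using P0 by simp
    finally show ?thesis by simp
  next
    assume Wall: "W = carrier_vec n"
    have "\<rho> h = 1\<^sub>m n" if h: "h \<in> H" for h
    proof -
      have hG: "h \<in> carrier G" using h HG by (rule subsetD[rotated])
      have rc: "\<rho> h \<in> carrier_mat n n" by (rule rep_carrier[OF rep hG])
      show ?thesis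
      proof (rule mat_eq_by_vec[OF rc])
        fix v :: "complex vec" assume v: "v \<in> carrier_vec n"
        then obtain w where w: "w \<in> carrier_vec n" "v = P *\<^sub>v w" using Wall unfolding W_def by auto
        have "\<rho> h *\<^sub>v v = (\<rho> h * P) *\<^sub>v w" using w rc Pc by simp
        also have "\<dots> = v" using PH[OF h] w by simp
        finally show "\<rho> h *\<^sub>v v = 1\<^sub>m n *\<^sub>v v" using v by simp
      qed simp
    qed
    then show ?thesis by blast
  qed
qed

lemma irr_decide:
  assumes irr: "irreducible_rep G n \<rho>" and sub: "is_subspace n W"
    and inv: "\<forall>g\<in>carrier G. \<forall>w\<in>W. \<rho> g *\<^sub>v w \<in> W"
  shows "W = {0\<^sub>v n} \<or> W = carrier_vec n"
proof -
  have irrW: "\<forall>W. is_subspace n W \<and> (\<forall>g\<in>carrier G. \<forall>w\<in>W. \<rho> g *\<^sub>v w \<in> W)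
          \<longrightarrow> W = {0\<^sub>v n} \<or> W = carrier_vec n"
    using irr by (simp add: irreducible_rep_def)
  show ?thesis using irrW[rule_format, OF conjI[OF sub inv]] .
qed

lemma vec_eq_of_diff_zero:
  fixes a b :: "complex vec"
  assumes "a \<in> carrier_vec m" "b \<in> carrier_vec m" "a - b = 0\<^sub>v m"
  shows "a = b"
proof (rule eq_vecI)
  fix i assume "i < dim_vec b"
  then have i: "i < m" using assms by auto
  have "(a - b) $ i = 0" using assms(3) i by simp
  moreover have "dim_vec b = m" using assms(2) by simp
  then have "(a - b) $ i = a $ i - b $ i" using i by (simp add: index_minus_vec)
  ultimately show "a $ i = b $ i" by simp
qed (use assms in auto)

lemma schur1:
  fixes G (structure)
  assumes irr1: "irreducible_rep G n \<rho>" and irr2: "irreducible_rep G m \<sigma>"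
    and T: "T \<in> carrier_mat n m" and comm: "\<forall>g\<in>carrier G. \<rho> g * T = T * \<sigma> g"
  shows "T = 0\<^sub>m n m \<or> character_of G \<rho> = character_of G \<sigma>"
proof (cases "T = 0\<^sub>m n m")
  case True then show ?thesis by simp
next
  case False
  then have nz: "T \<noteq> 0\<^sub>m n m" .
  have rep1: "is_rep G n \<rho>" using irr1 by (simp add: irreducible_rep_def)
  have rep2: "is_rep G m \<sigma>" using irr2 by (simp add: irreducible_rep_def)
  define K where "K = {v \<in> carrier_vec m. T *\<^sub>v v = 0\<^sub>v n}"
  have Ksub: "is_subspace m K" unfolding K_def by (rule kernel_subspace[OF T])
  have Kinv: "\<forall>g\<in>carrier G. \<forall>w\<in>K. \<sigma> g *\<^sub>v w \<in> K"
  proof (intro ballI)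
    fix g w assume g: "g \<in> carrier G" and w: "w \<in> K"
    have rc1: "\<rho> g \<in> carrier_mat n n" by (rule rep_carrier[OF rep1 g])
    have rc2: "\<sigma> g \<in> carrier_mat m m" by (rule rep_carrier[OF rep2 g])
    have wc: "w \<in> carrier_vec m" "T *\<^sub>v w = 0\<^sub>v n" using w unfolding K_def by auto
    have "T *\<^sub>v (\<sigma> g *\<^sub>v w) = (T * \<sigma> g) *\<^sub>v w" using T rc2 wc by simp
    also have "\<dots> = (\<rho> g * T) *\<^sub>v w" using comm g by simp
    also have "\<dots> = \<rho> g *\<^sub>v (T *\<^sub>v w)" using T rc1 wc by simp
    also have "\<dots> = 0\<^sub>v n" using wc(2) mat_zero_vec[OF rc1] by simp
    finally show "\<sigma> g *\<^sub>v w \<in> K" unfolding K_def using rc2 wc by simp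
  qed
  have Kc: "K = {0\<^sub>v m} \<or> K = carrier_vec m" by (rule irr_decide[OF irr2 Ksub Kinv])
  have Knot: "K \<noteq> carrier_vec m"
  proof
    assume "K = carrier_vec m"
    then have "T = 0\<^sub>m n m"
      by (intro mat_eq_by_vec[OF T]) (auto simp: K_def zero_mat_vec)
    then show False using nz by simp
  qed
  with Kc have K0: "K = {0\<^sub>v m}" by simp
  have inj: "a = b" if "a \<in> carrier_vec m" "b \<in> carrier_vec m" "T *\<^sub>v a = T *\<^sub>v b" for a b
  proof -
    have "T *\<^sub>v (a - b) = T *\<^sub>v a - T *\<^sub>v b" using T that by (simp add: mult_minus_distrib_mat_vec)
    also have "\<dots> = 0\<^sub>v n" using that T by (intro eq_vecI) auto
    finally have "a - b \<in> K" unfolding K_def using that by simp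
    then have "a - b = 0\<^sub>v m" using K0 by simp
    then show "a = b" by (rule vec_eq_of_diff_zero[OF that(1,2)])
  qed
  define W where "W = (\<lambda>v. T *\<^sub>v v) ` carrier_vec m"
  have Wsub: "is_subspace n W" unfolding W_def by (rule image_subspace[OF T])
  have Winv: "\<forall>g\<in>carrier G. \<forall>w\<in>W. \<rho> g *\<^sub>v w \<in> W"
  proof (intro ballI)
    fix g w assume g: "g \<in> carrier G" and "w \<in> W"
    then obtain v where v: "v \<in> carrier_vec m" "w = T *\<^sub>v v" unfolding W_def by auto
    have rc1: "\<rho> g \<in> carrier_mat n n" by (rule rep_carrier[OF rep1 g])
    have rc2: "\<sigma> g \<in> carrier_mat m m" by (rule rep_carrier[OF rep2 g])
    have "\<rho> g *\<^sub>v w = (\<rho> g * T) *\<^sub>v v" using v rc1 T by simp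
    also have "\<dots> = (T * \<sigma> g) *\<^sub>v v" using comm g by simp
    also have "\<dots> = T *\<^sub>v (\<sigma> g *\<^sub>v v)" using v rc2 T by simp
    finally show "\<rho> g *\<^sub>v w \<in> W" unfolding W_def using v rc2 by auto
  qed
  have Wc: "W = {0\<^sub>v n} \<or> W = carrier_vec n" by (rule irr_decide[OF irr1 Wsub Winv])
  have Wnot: "W \<noteq> {0\<^sub>v n}"
  proof
    assume W0: "W = {0\<^sub>v n}"
    have "T = 0\<^sub>m n m"
    proof (rule mat_eq_by_vec[OF T])
      fix v :: "complex vec" assume v: "v \<in> carrier_vec m"
      then have "T *\<^sub>v v \<in> W" unfolding W_def by auto
      then show "T *\<^sub>v v = 0\<^sub>m n m *\<^sub>v v" using W0 zero_mat_vec[OF v] by simp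
    qed auto
    then show False using nz by simp
  qed
  with Wc have Wall: "W = carrier_vec n" by simp
  define pre where "pre j = (SOME v. v \<in> carrier_vec m \<and> T *\<^sub>v v = unit_vec n j)" for j
  have pre: "pre j \<in> carrier_vec m \<and> T *\<^sub>v pre j = unit_vec n j" if "j < n" for j
  proof -
    have "unit_vec n j \<in> W" using Wall by simp
    then have "\<exists>v. v \<in> carrier_vec m \<and> T *\<^sub>v v = unit_vec n j" unfolding W_def by auto
    then show ?thesis unfolding pre_def by (rule someI_ex)
  qed
  define S where "S = mat m n (\<lambda>(i,j). pre j $ i)"
  have Sc: "S \<in> carrier_mat m n" unfolding S_def by simp
  have TS: "T * S = 1\<^sub>m n"
  proof (rule eq_matI)
    fix i j assume "i < dim_row (1\<^sub>m n :: complex mat)" "j < dim_col (1\<^sub>m n :: complex mat)"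
    then have ij: "i < n" "j < n" by auto
    have "(T * S) $$ (i,j) = (\<Sum>t\<in>{0..<m}. T $$ (i,t) * S $$ (t,j))" by (rule mult_entry[OF T Sc ij])
    also have "\<dots> = (\<Sum>t\<in>{0..<m}. T $$ (i,t) * pre j $ t)"
      by (rule sum.cong[OF refl]) (simp add: S_def ij)
    also have "\<dots> = (T *\<^sub>v pre j) $ i" using pre[OF ij(2)] by (intro mult_vec_entry[OF T _ ij(1), symmetric]) simp
    also have "\<dots> = (1\<^sub>m n :: complex mat) $$ (i,j)" using pre[OF ij(2)] ij by simp
    finally show "(T * S) $$ (i,j) = (1\<^sub>m n :: complex mat) $$ (i,j)" .
  qed (use T Sc in auto)
  have ST: "S * T = 1\<^sub>m m"
  proof (rule mat_eq_by_vec)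
    show "S * T \<in> carrier_mat m m" using Sc T by simp
    show "1\<^sub>m m \<in> carrier_mat m m" by simp
    fix x :: "complex vec" assume x: "x \<in> carrier_vec m"
    have "T *\<^sub>v ((S * T) *\<^sub>v x) = T *\<^sub>v (S *\<^sub>v (T *\<^sub>v x))" using T Sc x by simp
    also have "\<dots> = (T * S) *\<^sub>v (T *\<^sub>v x)" using T Sc x by simp
    also have "\<dots> = T *\<^sub>v x" using TS T x by simp
    finally have "(S * T) *\<^sub>v x = x" using inj x Sc T by simp
    then show "(S * T) *\<^sub>v x = 1\<^sub>m m *\<^sub>v x" using x by simp
  qed
  have "character_of G \<rho> = character_of G \<sigma>"
  proof (rule ext)
    fix g
    show "character_of G \<rho> g = character_of G \<sigma> g"
    proof (cases "g \<in> carrier G")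
      case g: True
      have rc1: "\<rho> g \<in> carrier_mat n n" by (rule rep_carrier[OF rep1 g])
      have rc2: "\<sigma> g \<in> carrier_mat m m" by (rule rep_carrier[OF rep2 g])
      have "\<rho> g = \<rho> g * (T * S)" using TS rc1 by simp
      also have "\<dots> = (\<rho> g * T) * S" using rc1 T Sc by simp
      also have "\<dots> = T * (\<sigma> g * S)" using comm g rc2 T Sc by simp
      finally have e: "\<rho> g = T * (\<sigma> g * S)" .
      have "mat_trace (\<rho> g) = mat_trace ((\<sigma> g * S) * T)" unfolding e
        by (rule trace_comm[OF T]) (use rc2 Sc in simp)
      also have "\<dots> = mat_trace (\<sigma> g)" using rc2 Sc T ST by simp
      finally show ?thesis using g by (simp add: character_of_def)
    next
      case False then show ?thesis by (simp add: character_of_def)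
    qed
  qed
  then show ?thesis by simp
qed

lemma schur2:
  fixes G (structure)
  assumes irr: "irreducible_rep G n \<rho>"
    and T: "T \<in> carrier_mat n n" and comm: "\<forall>g\<in>carrier G. \<rho> g * T = T * \<rho> g"
  shows "\<exists>c. T = c \<cdot>\<^sub>m 1\<^sub>m n"
proof -
  have rep: "is_rep G n \<rho>" and n: "n > 0" using irr by (auto simp: irreducible_rep_def)
  obtain c where "c \<in> spectrum T" using spectrum_non_empty[OF T n] by blast
  then obtain v where ev: "eigenvector T v c" unfolding spectrum_def eigenvalue_def by auto
  then have v: "v \<in> carrier_vec n" "v \<noteq> 0\<^sub>v n" "T *\<^sub>v v = c \<cdot>\<^sub>v v"
    unfolding eigenvector_def using T by auto
  define K where "K = {w \<in> carrier_vec n. T *\<^sub>v w = c \<cdot>\<^sub>v w}"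
  have Ksub: "is_subspace n K" unfolding is_subspace_def
  proof (intro conjI ballI allI)
    show "K \<subseteq> carrier_vec n" unfolding K_def by auto
    have "T *\<^sub>v 0\<^sub>v n = c \<cdot>\<^sub>v 0\<^sub>v n" using mat_zero_vec[OF T] by (intro eq_vecI) auto
    then show "0\<^sub>v n \<in> K" unfolding K_def by simp
    fix a b assume a: "a \<in> K" and b: "b \<in> K"
    have "T *\<^sub>v (a + b) = T *\<^sub>v a + T *\<^sub>v b" using a b T unfolding K_def by (simp add: mult_add_distrib_mat_vec)
    also have "\<dots> = c \<cdot>\<^sub>v a + c \<cdot>\<^sub>v b" using a b unfolding K_def by simp
    also have "\<dots> = c \<cdot>\<^sub>v (a + b)"
    proof -
      have "a \<in> carrier_vec n" "b \<in> carrier_vec n" using a b unfolding K_def by auto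
      then show ?thesis by (rule smult_add_distrib_vec[symmetric])
    qed
    finally show "a + b \<in> K" using a b unfolding K_def by simp
  next
    fix d a assume a: "a \<in> K"
    have "T *\<^sub>v (d \<cdot>\<^sub>v a) = d \<cdot>\<^sub>v (T *\<^sub>v a)" using a T unfolding K_def by (simp add: mult_mat_vec)
    also have "\<dots> = d \<cdot>\<^sub>v (c \<cdot>\<^sub>v a)" using a unfolding K_def by simp
    also have "\<dots> = c \<cdot>\<^sub>v (d \<cdot>\<^sub>v a)" by (simp add: smult_smult_assoc mult.commute)
    finally show "d \<cdot>\<^sub>v a \<in> K" using a unfolding K_def by simp
  qed
  have Kinv: "\<forall>g\<in>carrier G. \<forall>w\<in>K. \<rho> g *\<^sub>v w \<in> K"
  proof (intro ballI)
    fix g w assume g: "g \<in> carrier G" and w: "w \<in> K"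
    have rc: "\<rho> g \<in> carrier_mat n n" by (rule rep_carrier[OF rep g])
    have wc: "w \<in> carrier_vec n" "T *\<^sub>v w = c \<cdot>\<^sub>v w" using w unfolding K_def by auto
    have "T *\<^sub>v (\<rho> g *\<^sub>v w) = (T * \<rho> g) *\<^sub>v w" using T rc wc by simp
    also have "\<dots> = (\<rho> g * T) *\<^sub>v w" using comm g by simp
    also have "\<dots> = \<rho> g *\<^sub>v (c \<cdot>\<^sub>v w)" using T rc wc by simp
    also have "\<dots> = c \<cdot>\<^sub>v (\<rho> g *\<^sub>v w)" using rc wc by (simp add: mult_mat_vec)
    finally show "\<rho> g *\<^sub>v w \<in> K" unfolding K_def using rc wc by simp
  qed
  have "K = {0\<^sub>v n} \<or> K = carrier_vec n" by (rule irr_decide[OF irr Ksub Kinv])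
  moreover have "v \<in> K" using v unfolding K_def by simp
  ultimately have Kall: "K = carrier_vec n" using v(2) by auto
  have "T = c \<cdot>\<^sub>m 1\<^sub>m n"
  proof (rule mat_eq_by_vec[OF T])
    fix w :: "complex vec" assume w: "w \<in> carrier_vec n"
    then have "w \<in> K" using Kall by simp
    then have "T *\<^sub>v w = c \<cdot>\<^sub>v w" unfolding K_def by simp
    then show "T *\<^sub>v w = (c \<cdot>\<^sub>m 1\<^sub>m n) *\<^sub>v w" using smult_one_mat_vec[OF w] by simp
  qed simp
  then show ?thesis by blast
qed

definition Tm :: "('a, 'b) monoid_scheme \<Rightarrow> ('a \<Rightarrow> complex mat) \<Rightarrow> ('a \<Rightarrow> complex mat) \<Rightarrow> nat \<Rightarrow> nat \<Rightarrow> nat \<Rightarrow> nat \<Rightarrow> complex mat" where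
  "Tm G \<rho> \<sigma> n m j k = mat n m (\<lambda>(i,l). \<Sum>g\<in>carrier G. \<rho> g $$ (i,j) * \<sigma> (inv\<^bsub>G\<^esub> g) $$ (k,l))"

lemma Tm_carrier: "Tm G \<rho> \<sigma> n m j k \<in> carrier_mat n m"
  unfolding Tm_def by simp

lemma Tm_entry: "i < n \<Longrightarrow> l < m \<Longrightarrow> Tm G \<rho> \<sigma> n m j k $$ (i,l) = (\<Sum>g\<in>carrier G. \<rho> g $$ (i,j) * \<sigma> (inv\<^bsub>G\<^esub> g) $$ (k,l))"
  unfolding Tm_def by simp

lemma Tm_comm:
  fixes G (structure)
  assumes grp: "group G" and rep1: "is_rep G n \<rho>" and rep2: "is_rep G m \<sigma>"
    and j: "j < n" and k: "k < m" and h: "h \<in> carrier G"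
  shows "\<rho> h * Tm G \<rho> \<sigma> n m j k = Tm G \<rho> \<sigma> n m j k * \<sigma> h"
proof -
  interpret group G by fact
  let ?T = "Tm G \<rho> \<sigma> n m j k"
  have T: "?T \<in> carrier_mat n m" by (rule Tm_carrier)
  have rh: "\<rho> h \<in> carrier_mat n n" by (rule rep_carrier[OF rep1 h])
  have sh: "\<sigma> h \<in> carrier_mat m m" by (rule rep_carrier[OF rep2 h])
  show ?thesis
  proof (rule eq_matI)
    fix i l assume "i < dim_row (?T * \<sigma> h)" "l < dim_col (?T * \<sigma> h)"
    then have il: "i < n" "l < m" using T sh by auto
    have "(\<rho> h * ?T) $$ (i,l) = (\<Sum>t\<in>{0..<n}. \<rho> h $$ (i,t) * ?T $$ (t,l))"
      by (rule mult_entry[OF rh T il])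
    also have "\<dots> = (\<Sum>t\<in>{0..<n}. \<Sum>g\<in>carrier G. \<rho> h $$ (i,t) * (\<rho> g $$ (t,j) * \<sigma> (inv g) $$ (k,l)))"
      by (rule sum.cong[OF refl]) (simp add: Tm_entry il sum_distrib_left)
    also have "\<dots> = (\<Sum>g\<in>carrier G. \<Sum>t\<in>{0..<n}. \<rho> h $$ (i,t) * (\<rho> g $$ (t,j) * \<sigma> (inv g) $$ (k,l)))"
      by (rule sum.swap)
    also have "\<dots> = (\<Sum>g\<in>carrier G. \<rho> (h \<otimes> g) $$ (i,j) * \<sigma> (inv g) $$ (k,l))"
    proof (rule sum.cong[OF refl])
      fix g assume g: "g \<in> carrier G"
      have "(\<Sum>t\<in>{0..<n}. \<rho> h $$ (i,t) * (\<rho> g $$ (t,j) * \<sigma> (inv g) $$ (k,l)))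
          = (\<Sum>t\<in>{0..<n}. \<rho> h $$ (i,t) * \<rho> g $$ (t,j)) * \<sigma> (inv g) $$ (k,l)"
        by (simp add: sum_distrib_right mult.assoc)
      also have "(\<Sum>t\<in>{0..<n}. \<rho> h $$ (i,t) * \<rho> g $$ (t,j)) = \<rho> (h \<otimes> g) $$ (i,j)"
        using mult_entry[OF rh rep_carrier[OF rep1 g] il(1) j] rep_mult[OF rep1 h g] by simp
      finally show "(\<Sum>t\<in>{0..<n}. \<rho> h $$ (i,t) * (\<rho> g $$ (t,j) * \<sigma> (inv g) $$ (k,l)))
          = \<rho> (h \<otimes> g) $$ (i,j) * \<sigma> (inv g) $$ (k,l)" .
    qed
    also have "\<dots> = (\<Sum>g\<in>carrier G. \<rho> (h \<otimes> g) $$ (i,j) * \<sigma> (inv (h \<otimes> g) \<otimes> h) $$ (k,l))"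
    proof (rule sum.cong[OF refl])
      fix g assume g: "g \<in> carrier G"
      have "inv (h \<otimes> g) \<otimes> h = inv g" using g h by (simp add: inv_mult_group m_assoc)
      then show "\<rho> (h \<otimes> g) $$ (i,j) * \<sigma> (inv g) $$ (k,l) = \<rho> (h \<otimes> g) $$ (i,j) * \<sigma> (inv (h \<otimes> g) \<otimes> h) $$ (k,l)"
        by simp
    qed
    also have "\<dots> = (\<Sum>g\<in>carrier G. \<rho> g $$ (i,j) * \<sigma> (inv g \<otimes> h) $$ (k,l))"
      by (rule sum_left_mult_reindex[OF grp subgroup_self h, where f="\<lambda>x. \<rho> x $$ (i,j) * \<sigma> (inv x \<otimes> h) $$ (k,l)"])
    also have "\<dots> = (\<Sum>g\<in>carrier G. \<Sum>b\<in>{0..<m}. \<rho> g $$ (i,j) * \<sigma> (inv g) $$ (k,b) * \<sigma> h $$ (b,l))"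
    proof (rule sum.cong[OF refl])
      fix g assume g: "g \<in> carrier G"
      have ig: "inv g \<in> carrier G" using g by simp
      have "\<sigma> (inv g \<otimes> h) $$ (k,l) = (\<Sum>b\<in>{0..<m}. \<sigma> (inv g) $$ (k,b) * \<sigma> h $$ (b,l))"
        using mult_entry[OF rep_carrier[OF rep2 ig] sh k il(2)] rep_mult[OF rep2 ig h] by simp
      then show "\<rho> g $$ (i,j) * \<sigma> (inv g \<otimes> h) $$ (k,l) = (\<Sum>b\<in>{0..<m}. \<rho> g $$ (i,j) * \<sigma> (inv g) $$ (k,b) * \<sigma> h $$ (b,l))"
        by (simp add: sum_distrib_left mult.assoc)
    qed
    also have "\<dots> = (\<Sum>b\<in>{0..<m}. \<Sum>g\<in>carrier G. \<rho> g $$ (i,j) * \<sigma> (inv g) $$ (k,b) * \<sigma> h $$ (b,l))"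
      by (rule sum.swap)
    also have "\<dots> = (\<Sum>b\<in>{0..<m}. ?T $$ (i,b) * \<sigma> h $$ (b,l))"
      by (rule sum.cong[OF refl]) (simp add: Tm_entry il sum_distrib_right)
    also have "\<dots> = (?T * \<sigma> h) $$ (i,l)"
      by (rule mult_entry[OF T sh il, symmetric])
    finally show "(\<rho> h * ?T) $$ (i,l) = (?T * \<sigma> h) $$ (i,l)" .
  qed (use T rh sh in auto)
qed

lemma char_sum_decomp:
  fixes G (structure)
  assumes grp: "group G" and rep1: "is_rep G n \<rho>" and rep2: "is_rep G m \<sigma>"
  shows "(\<Sum>g\<in>carrier G. character_of G \<rho> g * character_of G \<sigma> (inv g))
    = (\<Sum>i<n. \<Sum>k<m. Tm G \<rho> \<sigma> n m i k $$ (i,k))"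
proof -
  interpret group G by fact
  have "(\<Sum>g\<in>carrier G. character_of G \<rho> g * character_of G \<sigma> (inv g))
     = (\<Sum>g\<in>carrier G. \<Sum>i<n. \<Sum>k<m. \<rho> g $$ (i,i) * \<sigma> (inv g) $$ (k,k))"
  proof (rule sum.cong[OF refl])
    fix g assume g: "g \<in> carrier G"
    have ig: "inv g \<in> carrier G" using g by simp
    have "character_of G \<rho> g = (\<Sum>i<n. \<rho> g $$ (i,i))"
      using g rep_carrier[OF rep1 g] by (simp add: character_of_def mat_trace_def)
    moreover have "character_of G \<sigma> (inv g) = (\<Sum>k<m. \<sigma> (inv g) $$ (k,k))"
      using ig rep_carrier[OF rep2 ig] by (simp add: character_of_def mat_trace_def)
    ultimately show "character_of G \<rho> g * character_of G \<sigma> (inv g)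
      = (\<Sum>i<n. \<Sum>k<m. \<rho> g $$ (i,i) * \<sigma> (inv g) $$ (k,k))"
      by (simp add: sum_product)
  qed
  also have "\<dots> = (\<Sum>i<n. \<Sum>g\<in>carrier G. \<Sum>k<m. \<rho> g $$ (i,i) * \<sigma> (inv g) $$ (k,k))"
    by (rule sum.swap)
  also have "\<dots> = (\<Sum>i<n. \<Sum>k<m. \<Sum>g\<in>carrier G. \<rho> g $$ (i,i) * \<sigma> (inv g) $$ (k,k))"
    by (rule sum.cong[OF refl], rule sum.swap)
  also have "\<dots> = (\<Sum>i<n. \<Sum>k<m. Tm G \<rho> \<sigma> n m i k $$ (i,k))"
    by (intro sum.cong refl) (simp add: Tm_entry)
  finally show ?thesis .
qed

lemma orth_diff:
  fixes G (structure)
  assumes grp: "group G" and irr1: "irreducible_rep G n \<rho>" and irr2: "irreducible_rep G m \<sigma>"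
    and ne: "character_of G \<rho> \<noteq> character_of G \<sigma>"
  shows "(\<Sum>g\<in>carrier G. character_of G \<rho> g * character_of G \<sigma> (inv g)) = 0"
proof -
  have rep1: "is_rep G n \<rho>" using irr1 by (simp add: irreducible_rep_def)
  have rep2: "is_rep G m \<sigma>" using irr2 by (simp add: irreducible_rep_def)
  have T0: "Tm G \<rho> \<sigma> n m i k = 0\<^sub>m n m" if "i < n" "k < m" for i k
    using schur1[OF irr1 irr2 Tm_carrier] Tm_comm[OF grp rep1 rep2 that] ne by blast
  show ?thesis unfolding char_sum_decomp[OF grp rep1 rep2]
    by (intro sum.neutral ballI) (simp add: T0)
qed

lemma orth_same:
  fixes G (structure)
  assumes grp: "group G" and irr: "irreducible_rep G n \<rho>"
  shows "(\<Sum>g\<in>carrier G. character_of G \<rho> g * character_of G \<rho> (inv g)) = of_nat (card (carrier G))"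
proof -
  interpret group G by fact
  have rep: "is_rep G n \<rho>" and n: "n > 0" using irr by (auto simp: irreducible_rep_def)
  have sc: "\<exists>c. Tm G \<rho> \<rho> n n i k = c \<cdot>\<^sub>m 1\<^sub>m n" if "i < n" "k < n" for i k
    using schur2[OF irr Tm_carrier] Tm_comm[OF grp rep rep that] by blast
  have diag: "Tm G \<rho> \<rho> n n i k $$ (i,k) = (if i = k then of_nat (card (carrier G)) / of_nat n else 0)"
    if ik: "i < n" "k < n" for i k
  proof -
    obtain c where c: "Tm G \<rho> \<rho> n n i k = c \<cdot>\<^sub>m 1\<^sub>m n" using sc[OF ik] by blast
    have "(\<Sum>t<n. Tm G \<rho> \<rho> n n i k $$ (t,t)) = (\<Sum>t<n. c)" unfolding c by simp
    also have "\<dots> = of_nat n * c" by simp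
    finally have tr1: "(\<Sum>t<n. Tm G \<rho> \<rho> n n i k $$ (t,t)) = of_nat n * c" .
    have "(\<Sum>t<n. Tm G \<rho> \<rho> n n i k $$ (t,t)) = (\<Sum>t<n. \<Sum>g\<in>carrier G. \<rho> g $$ (t,i) * \<rho> (inv g) $$ (k,t))"
      by (rule sum.cong[OF refl]) (simp add: Tm_entry)
    also have "\<dots> = (\<Sum>g\<in>carrier G. \<Sum>t<n. \<rho> (inv g) $$ (k,t) * \<rho> g $$ (t,i))"
      by (subst sum.swap) (simp add: mult.commute)
    also have "\<dots> = (\<Sum>g\<in>carrier G. (if k = i then 1 else 0))"
    proof (rule sum.cong[OF refl])
      fix g assume g: "g \<in> carrier G"
      have ig: "inv g \<in> carrier G" using g by simp
      have "\<rho> (inv g) * \<rho> g = 1\<^sub>m n" using rep_mult[OF rep ig g, symmetric] rep_one[OF rep] g by simp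
      then have "(\<rho> (inv g) * \<rho> g) $$ (k,i) = (if k = i then 1 else 0)" using ik by simp
      moreover have "(\<rho> (inv g) * \<rho> g) $$ (k,i) = (\<Sum>t\<in>{0..<n}. \<rho> (inv g) $$ (k,t) * \<rho> g $$ (t,i))"
        by (rule mult_entry[OF rep_carrier[OF rep ig] rep_carrier[OF rep g] ik(2,1)])
      ultimately show "(\<Sum>t<n. \<rho> (inv g) $$ (k,t) * \<rho> g $$ (t,i)) = (if k = i then 1 else 0)"
        by (simp add: atLeast0LessThan)
    qed
    also have "\<dots> = (if i = k then of_nat (card (carrier G)) else 0)" by simp
    finally have "of_nat n * c = (if i = k then of_nat (card (carrier G)) else 0)" using tr1 by simp
    then have "c = (if i = k then of_nat (card (carrier G)) / of_nat n else 0)"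
      using n by (auto simp: field_simps)
    then show ?thesis unfolding c using ik by simp
  qed
  have "(\<Sum>g\<in>carrier G. character_of G \<rho> g * character_of G \<rho> (inv g))
      = (\<Sum>i<n. \<Sum>k<n. Tm G \<rho> \<rho> n n i k $$ (i,k))" by (rule char_sum_decomp[OF grp rep rep])
  also have "\<dots> = (\<Sum>i<n. \<Sum>k<n. (if i = k then of_nat (card (carrier G)) / of_nat n else 0))"
    by (intro sum.cong refl) (simp add: diag)
  also have "\<dots> = (\<Sum>i<n. of_nat (card (carrier G)) / (of_nat n :: complex))"
    by (rule sum.cong[OF refl]) simp
  also have "\<dots> = of_nat (card (carrier G))" using n by simp
  finally show ?thesis .
qed

lemma Irr_orth:
  fixes G (structure)
  assumes grp: "group G" and c1: "\<chi> \<in> Irr G" and c2: "\<psi> \<in> Irr G"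
  shows "(\<Sum>g\<in>carrier G. \<chi> g * \<psi> (inv g)) = (if \<chi> = \<psi> then of_nat (card (carrier G)) else 0)"
proof -
  obtain n \<rho> where r: "irreducible_rep G n \<rho>" "\<chi> = character_of G \<rho>" using c1 unfolding Irr_def by blast
  obtain m \<sigma> where s: "irreducible_rep G m \<sigma>" "\<psi> = character_of G \<sigma>" using c2 unfolding Irr_def by blast
  show ?thesis
  proof (cases "\<chi> = \<psi>")
    case True
    then show ?thesis using orth_same[OF grp r(1)] r(2) by simp
  next
    case False
    then show ?thesis using orth_diff[OF grp r(1) s(1)] r(2) s(2) by simp
  qed
qed

lemma sum_upto_if:
  fixes m k :: nat
  assumes "m \<le> k"
  shows "(\<Sum>t\<in>{0..<k}. if t < m then f t else (0::complex)) = (\<Sum>t\<in>{0..<m}. f t)"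
proof -
  have "(\<Sum>t\<in>{0..<k}. if t < m then f t else (0::complex)) = (\<Sum>t\<in>{t\<in>{0..<k}. t < m}. f t)"
    using sum.inter_filter[of "{0..<k}" f "\<lambda>t. t < m"] by simp
  also have "{t\<in>{0..<k}. t < m} = {0..<m}" using assms by auto
  finally show ?thesis .
qed

lemma Irr_finite:
  fixes G (structure)
  assumes grp: "group G" and fin: "finite (carrier G)"
  shows "finite (Irr G)"
proof (rule ccontr)
  interpret group G by fact
  assume inf: "infinite (Irr G)"
  define m where "m = card (carrier G)"
  define k where "k = Suc m"
  obtain S where S: "S \<subseteq> Irr G" "finite S" "card S = k"
    using infinite_arbitrarily_large[OF inf] by blast
  obtain c where c: "bij_betw c {0..<k} S" using ex_bij_betw_nat_finite[OF S(2)] S(3) by auto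
  obtain e where e: "bij_betw e {0..<m} (carrier G)" using ex_bij_betw_nat_finite[OF fin] m_def by auto
  have cI: "c i \<in> Irr G" if "i < k" for i using c S(1) that by (auto simp: bij_betw_def)
  have mpos: "m > 0" using fin m_def one_closed by (auto simp add: card_gt_0_iff)
  define X :: "complex mat" where "X = mat k k (\<lambda>(i,t). if t < m then c i (e t) else 0)"
  define Y :: "complex mat" where "Y = mat k k (\<lambda>(t,j). if t < m then c j (inv (e t)) / of_nat m else 0)"
  have Xc: "X \<in> carrier_mat k k" and Yc: "Y \<in> carrier_mat k k" unfolding X_def Y_def by auto
  have XY: "X * Y = 1\<^sub>m k"
  proof (rule eq_matI)
    fix i j assume "i < dim_row (1\<^sub>m k :: complex mat)" "j < dim_col (1\<^sub>m k :: complex mat)"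
    then have ij: "i < k" "j < k" by auto
    have "(X * Y) $$ (i,j) = (\<Sum>t\<in>{0..<k}. X $$ (i,t) * Y $$ (t,j))" by (rule mult_entry[OF Xc Yc ij])
    also have "\<dots> = (\<Sum>t\<in>{0..<k}. if t < m then c i (e t) * c j (inv (e t)) / of_nat m else 0)"
      by (rule sum.cong[OF refl]) (auto simp: X_def Y_def ij)
    also have "\<dots> = (\<Sum>t\<in>{0..<m}. c i (e t) * c j (inv (e t)) / of_nat m)"
      by (rule sum_upto_if) (simp add: k_def)
    also have "\<dots> = (\<Sum>g\<in>carrier G. c i g * c j (inv g) / of_nat m)"
      by (rule sum.reindex_bij_betw[OF e])
    also have "\<dots> = (\<Sum>g\<in>carrier G. c i g * c j (inv g)) / of_nat m"
      by (simp add: sum_divide_distrib)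
    also have "\<dots> = (if c i = c j then 1 else 0)"
      using Irr_orth[OF grp cI[OF ij(1)] cI[OF ij(2)]] mpos m_def by simp
    also have "\<dots> = (if i = j then 1 else 0)"
      using c ij by (auto simp: bij_betw_def inj_on_def)
    also have "\<dots> = (1\<^sub>m k :: complex mat) $$ (i,j)" using ij by simp
    finally show "(X * Y) $$ (i,j) = (1\<^sub>m k :: complex mat) $$ (i,j)" .
  qed (use Xc Yc in auto)
  have YX: "Y * X = 1\<^sub>m k" by (rule mat_mult_left_right_inverse[OF Xc Yc XY])
  have mk: "m < k" by (simp add: k_def)
  have "(Y * X) $$ (m,m) = (\<Sum>t\<in>{0..<k}. Y $$ (m,t) * X $$ (t,m))" by (rule mult_entry[OF Yc Xc mk mk])
  also have "\<dots> = 0" by (intro sum.neutral ballI) (simp add: Y_def mk)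
  finally have "(Y * X) $$ (m,m) = 0" .
  moreover have "(1\<^sub>m k :: complex mat) $$ (m,m) = 1" using mk by simp
  ultimately show False using YX by simp
qed

lemma normal_self':
  fixes G (structure)
  assumes "group G" shows "carrier G \<lhd> G"
proof -
  interpret group G by fact
  show ?thesis unfolding normal_inv_iff using subgroup_self by auto
qed

lemma nonprincipal_sum:
  fixes G (structure)
  assumes grp: "group G" and fin: "finite (carrier G)" and chi: "\<chi> \<in> Irr G"
    and np: "\<chi> \<noteq> principal_char G"
  shows "(\<Sum>g\<in>carrier G. \<chi> g) = 0"
proof -
  interpret group G by fact
  obtain n \<rho> where r: "irreducible_rep G n \<rho>" "\<chi> = character_of G \<rho>" using chi unfolding Irr_def by blast
  have rep: "is_rep G n \<rho>" and n: "n > 0" using r(1) by (auto simp: irreducible_rep_def)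
  have "(\<Sum>h\<in>carrier G. mat_trace (\<rho> h)) = 0 \<or> (\<forall>h\<in>carrier G. \<rho> h = 1\<^sub>m n)"
    by (rule normal_fixed[OF grp fin normal_self'[OF grp] r(1)])
  then show ?thesis
  proof
    assume "(\<Sum>h\<in>carrier G. mat_trace (\<rho> h)) = 0"
    then show ?thesis unfolding r(2) character_of_def by simp
  next
    assume triv: "\<forall>h\<in>carrier G. \<rho> h = 1\<^sub>m n"
    have n1: "n = 1"
    proof (rule ccontr)
      assume "n \<noteq> 1"
      then have n2: "1 < n" using n by simp
      define W :: "complex vec set" where "W = {c \<cdot>\<^sub>v unit_vec n 0 | c. True}"
      have Wsub: "is_subspace n W" unfolding is_subspace_def W_def
      proof (intro conjI ballI allI)
        show "{(c::complex) \<cdot>\<^sub>v unit_vec n 0 |c. True} \<subseteq> carrier_vec n" by auto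
        have "0\<^sub>v n = (0::complex) \<cdot>\<^sub>v unit_vec n 0" by (intro eq_vecI) auto
        then show "0\<^sub>v n \<in> {(c::complex) \<cdot>\<^sub>v unit_vec n 0 |c. True}" by blast
        fix v w assume "v \<in> {(c::complex) \<cdot>\<^sub>v unit_vec n 0 |c. True}" "w \<in> {(c::complex) \<cdot>\<^sub>v unit_vec n 0 |c. True}"
        then obtain a b where "v = a \<cdot>\<^sub>v unit_vec n 0" "w = b \<cdot>\<^sub>v unit_vec n 0" by auto
        moreover have "a \<cdot>\<^sub>v unit_vec n 0 + b \<cdot>\<^sub>v unit_vec n 0 = (a + b) \<cdot>\<^sub>v (unit_vec n 0 :: complex vec)"
          by (intro eq_vecI) (auto simp: distrib_right)
        ultimately show "v + w \<in> {(c::complex) \<cdot>\<^sub>v unit_vec n 0 |c. True}" by auto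
      next
        fix d v assume "v \<in> {(c::complex) \<cdot>\<^sub>v unit_vec n 0 |c. True}"
        then obtain a where "v = a \<cdot>\<^sub>v unit_vec n 0" by auto
        then have "d \<cdot>\<^sub>v v = (d * a) \<cdot>\<^sub>v unit_vec n 0" by (simp add: smult_smult_assoc)
        then show "d \<cdot>\<^sub>v v \<in> {(c::complex) \<cdot>\<^sub>v unit_vec n 0 |c. True}" by auto
      qed
      have Winv: "\<forall>g\<in>carrier G. \<forall>w\<in>W. \<rho> g *\<^sub>v w \<in> W"
        using triv unfolding W_def by auto
      have "W = {0\<^sub>v n} \<or> W = carrier_vec n" by (rule irr_decide[OF r(1) Wsub Winv])
      moreover have "unit_vec n 0 \<in> W" unfolding W_def
        by (rule CollectI, rule exI[of _ 1]) simp
      moreover have "unit_vec n 0 \<noteq> 0\<^sub>v n" using n by simp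
      moreover have "(unit_vec n 1 :: complex vec) \<notin> W"
      proof
        assume "unit_vec n 1 \<in> W"
        then obtain a :: complex where a: "unit_vec n 1 = a \<cdot>\<^sub>v unit_vec n 0" unfolding W_def by auto
        have "unit_vec n 1 $ 1 = (1::complex)" using n2 by simp
        moreover have "(a \<cdot>\<^sub>v unit_vec n 0) $ 1 = 0" using n2 by simp
        ultimately show False using a by simp
      qed
      ultimately show False by auto
    qed
    have "\<chi> = principal_char G"
    proof
      fix g show "\<chi> g = principal_char G g"
        using triv n1 unfolding r(2) character_of_def principal_char_def
        by (simp add: mat_trace_one)
    qed
    with np show ?thesis by simp
  qed
qed

lemma Irr_one:
  assumes "group G" "\<chi> \<in> Irr G"
  shows "\<exists>d>0. \<chi> \<one>\<^bsub>G\<^esub> = of_nat d"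
proof -
  obtain n \<rho> where r: "irreducible_rep G n \<rho>" "\<chi> = character_of G \<rho>" using assms(2) unfolding Irr_def by blast
  have "is_rep G n \<rho>" "n > 0" using r(1) by (auto simp: irreducible_rep_def)
  then show ?thesis using char_one[OF assms(1)] r(2) by blast
qed

theorem mainTheorem4:
  fixes G :: "('a, 'b) monoid_scheme" and N :: "'a set" and A :: "('a \<Rightarrow> complex) set"
  assumes "group G" and "finite (carrier G)"
    and "camina_pair G N"
    and "A \<noteq> {}" and "A \<subseteq> Irr G" and "principal_char G \<notin> A"
    and "\<forall>\<chi>\<in>A. \<forall>x\<in>carrier G - N. \<chi> x = 0"
    and "\<exists>\<alpha> :: ('a \<Rightarrow> complex) \<Rightarrow> nat. (\<forall>\<chi>\<in>A. \<alpha> \<chi> > 0) \<and>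
           (\<exists>c. \<forall>x\<in>N - {\<one>\<^bsub>G\<^esub>}. (\<Sum>\<chi>\<in>A. of_nat (\<alpha> \<chi>) * \<chi> x) = c)"
  shows "A = Irr_rel G N"
proof -
  have grp: "group G" and fin: "finite (carrier G)" using assms(1,2) .
  interpret group G by fact
  have nN: "N \<lhd> G" using assms(3) by (simp add: camina_pair_def)
  have sN: "subgroup N G" using nN by (rule normal_imp_subgroup)
  have NG: "N \<subseteq> carrier G" using sN by (rule subgroup.subset)
  have finN: "finite N" using fin NG by (rule finite_subset[rotated])
  have oneN: "\<one>\<^bsub>G\<^esub> \<in> N" using sN by (rule subgroup.one_closed)
  have cardN: "card N > 0" using finN oneN by (auto simp: card_gt_0_iff)
  have Afin: "finite A" using Irr_finite[OF grp fin] assms(5) by (rule finite_subset[rotated])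
  obtain \<alpha> :: "('a \<Rightarrow> complex) \<Rightarrow> nat" and c where
    \<alpha>: "\<forall>\<chi>\<in>A. \<alpha> \<chi> > 0" and cst: "\<forall>x\<in>N - {\<one>\<^bsub>G\<^esub>}. (\<Sum>\<chi>\<in>A. of_nat (\<alpha> \<chi>) * \<chi> x) = c"
    using assms(8) by blast
  show ?thesis
  proof (rule equalityI; rule subsetI)
    fix \<chi> assume chiA: "\<chi> \<in> A"
    have chi: "\<chi> \<in> Irr G" using chiA assms(5) by blast
    have "\<not> N \<subseteq> char_ker G \<chi>"
    proof
      assume ker: "N \<subseteq> char_ker G \<chi>"
      obtain d where d: "d > 0" "\<chi> \<one>\<^bsub>G\<^esub> = of_nat d" using Irr_one[OF grp chi] by blast
      have vals: "\<chi> g = of_nat d" if "g \<in> N" for g using ker that d(2) by (auto simp: char_ker_def)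
      have np: "\<chi> \<noteq> principal_char G" using chiA assms(6) by blast
      have "(\<Sum>g\<in>carrier G. \<chi> g) = 0" by (rule nonprincipal_sum[OF grp fin chi np])
      moreover have "(\<Sum>g\<in>carrier G. \<chi> g) = (\<Sum>g\<in>N. \<chi> g)"
        using assms(7) chiA by (intro sum.mono_neutral_right[OF fin NG]) auto
      moreover have "(\<Sum>g\<in>N. \<chi> g) = of_nat (card N) * of_nat d" using vals by simp
      ultimately have "of_nat (card N) * (of_nat d :: complex) = 0" by simp
      then show False using cardN d(1) by simp
    qed
    then show "\<chi> \<in> Irr_rel G N" unfolding Irr_rel_def using chi by blast
  next
    fix \<theta> assume th: "\<theta> \<in> Irr_rel G N"
    have thI: "\<theta> \<in> Irr G" and notker: "\<not> N \<subseteq> char_ker G \<theta>" using th unfolding Irr_rel_def by auto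
    show "\<theta> \<in> A"
    proof (rule ccontr)
      assume thA: "\<theta> \<notin> A"
      obtain n \<rho> where r: "irreducible_rep G n \<rho>" "\<theta> = character_of G \<rho>" using thI unfolding Irr_def by blast
      have rep: "is_rep G n \<rho>" and n: "n > 0" using r(1) by (auto simp: irreducible_rep_def)
      have th1: "\<theta> \<one>\<^bsub>G\<^esub> = of_nat n" using char_one[OF grp rep] r(2) by simp
      have SN: "(\<Sum>g\<in>N. \<theta> g) = 0"
      proof -
        have "(\<Sum>h\<in>N. mat_trace (\<rho> h)) = 0 \<or> (\<forall>h\<in>N. \<rho> h = 1\<^sub>m n)"
          by (rule normal_fixed[OF grp fin nN r(1)])
        moreover have "(\<Sum>g\<in>N. \<theta> g) = (\<Sum>h\<in>N. mat_trace (\<rho> h))"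
          using NG unfolding r(2) character_of_def by (intro sum.cong) auto
        moreover have "\<not> (\<forall>h\<in>N. \<rho> h = 1\<^sub>m n)"
        proof
          assume triv: "\<forall>h\<in>N. \<rho> h = 1\<^sub>m n"
          have "N \<subseteq> char_ker G \<theta>"
          proof
            fix h assume h: "h \<in> N"
            then have "\<theta> h = of_nat n" using triv NG unfolding r(2) character_of_def
              by (auto simp: mat_trace_one)
            then show "h \<in> char_ker G \<theta>" using h NG th1 by (auto simp: char_ker_def)
          qed
          then show False using notker by simp
        qed
        ultimately show ?thesis by simp
      qed
      define \<psi> where "\<psi> x = (\<Sum>\<chi>\<in>A. of_nat (\<alpha> \<chi>) * \<chi> x)" for x
      define p where "p = \<psi> \<one>\<^bsub>G\<^esub>"
      have psi0: "\<psi> g = 0" if "g \<in> carrier G - N" for g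
        unfolding \<psi>_def using assms(7) that by simp
      have psic: "\<psi> g = c" if "g \<in> N - {\<one>\<^bsub>G\<^esub>}" for g
        unfolding \<psi>_def using cst that by simp
      have a: "(\<Sum>g\<in>carrier G. \<psi> g * \<theta> (inv\<^bsub>G\<^esub> g)) = 0"
      proof -
        have "(\<Sum>g\<in>carrier G. \<psi> g * \<theta> (inv\<^bsub>G\<^esub> g))
            = (\<Sum>\<chi>\<in>A. of_nat (\<alpha> \<chi>) * (\<Sum>g\<in>carrier G. \<chi> g * \<theta> (inv\<^bsub>G\<^esub> g)))"
          unfolding \<psi>_def by (simp add: sum_distrib_left sum_distrib_right mult.assoc sum.swap[of _ "carrier G"])
        also have "\<dots> = 0"
        proof (intro sum.neutral ballI)
          fix \<chi> assume "\<chi> \<in> A"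
          then have "\<chi> \<in> Irr G" "\<chi> \<noteq> \<theta>" using assms(5) thA by auto
          then show "of_nat (\<alpha> \<chi>) * (\<Sum>g\<in>carrier G. \<chi> g * \<theta> (inv\<^bsub>G\<^esub> g)) = 0"
            using Irr_orth[OF grp _ thI] by simp
        qed
        finally show ?thesis .
      qed
      have b: "(\<Sum>g\<in>carrier G. \<psi> g) = 0"
      proof -
        have "(\<Sum>g\<in>carrier G. \<psi> g) = (\<Sum>\<chi>\<in>A. of_nat (\<alpha> \<chi>) * (\<Sum>g\<in>carrier G. \<chi> g))"
          unfolding \<psi>_def by (simp add: sum_distrib_left sum.swap[of _ "carrier G"])
        also have "\<dots> = 0"
        proof (intro sum.neutral ballI)
          fix \<chi> assume "\<chi> \<in> A"
          then have "\<chi> \<in> Irr G" "\<chi> \<noteq> principal_char G" using assms(5,6) by auto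
          then show "of_nat (\<alpha> \<chi>) * (\<Sum>g\<in>carrier G. \<chi> g) = 0"
            using nonprincipal_sum[OF grp fin] by simp
        qed
        finally show ?thesis .
      qed
      have a2: "(\<Sum>g\<in>carrier G. \<psi> g * \<theta> (inv\<^bsub>G\<^esub> g))
          = p * \<theta> \<one>\<^bsub>G\<^esub> + c * (\<Sum>g\<in>N - {\<one>\<^bsub>G\<^esub>}. \<theta> (inv\<^bsub>G\<^esub> g))"
      proof -
        have "(\<Sum>g\<in>carrier G. \<psi> g * \<theta> (inv\<^bsub>G\<^esub> g)) = (\<Sum>g\<in>N. \<psi> g * \<theta> (inv\<^bsub>G\<^esub> g))"
          using psi0 by (intro sum.mono_neutral_right[OF fin NG]) auto
        also have "\<dots> = \<psi> \<one>\<^bsub>G\<^esub> * \<theta> (inv\<^bsub>G\<^esub> \<one>\<^bsub>G\<^esub>) + (\<Sum>g\<in>N - {\<one>\<^bsub>G\<^esub>}. \<psi> g * \<theta> (inv\<^bsub>G\<^esub> g))"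
          by (rule sum.remove[OF finN oneN])
        also have "(\<Sum>g\<in>N - {\<one>\<^bsub>G\<^esub>}. \<psi> g * \<theta> (inv\<^bsub>G\<^esub> g)) = (\<Sum>g\<in>N - {\<one>\<^bsub>G\<^esub>}. c * \<theta> (inv\<^bsub>G\<^esub> g))"
          using psic by (intro sum.cong) auto
        finally show ?thesis by (simp add: p_def sum_distrib_left)
      qed
      have invsum: "(\<Sum>g\<in>N - {\<one>\<^bsub>G\<^esub>}. \<theta> (inv\<^bsub>G\<^esub> g)) = - \<theta> \<one>\<^bsub>G\<^esub>"
      proof -
        have "(\<Sum>g\<in>N. \<theta> (inv\<^bsub>G\<^esub> g)) = (\<Sum>g\<in>N. \<theta> g)"
          by (rule sum_inv_reindex[OF grp sN])
        also have "\<dots> = 0" by (rule SN)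
        finally have "(\<Sum>g\<in>N. \<theta> (inv\<^bsub>G\<^esub> g)) = 0" .
        moreover have "(\<Sum>g\<in>N. \<theta> (inv\<^bsub>G\<^esub> g)) = \<theta> (inv\<^bsub>G\<^esub> \<one>\<^bsub>G\<^esub>) + (\<Sum>g\<in>N - {\<one>\<^bsub>G\<^esub>}. \<theta> (inv\<^bsub>G\<^esub> g))"
          by (rule sum.remove[OF finN oneN])
        ultimately show ?thesis by (simp add: eq_neg_iff_add_eq_0 add.commute)
      qed
      have pc: "p = c"
      proof -
        have "(p - c) * of_nat n = 0" using a a2 invsum th1 by (simp add: algebra_simps)
        then show ?thesis using n by simp
      qed
      have b2: "(\<Sum>g\<in>carrier G. \<psi> g) = p + c * of_nat (card (N - {\<one>\<^bsub>G\<^esub>}))"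
      proof -
        have "(\<Sum>g\<in>carrier G. \<psi> g) = (\<Sum>g\<in>N. \<psi> g)"
          using psi0 by (intro sum.mono_neutral_right[OF fin NG]) auto
        also have "\<dots> = \<psi> \<one>\<^bsub>G\<^esub> + (\<Sum>g\<in>N - {\<one>\<^bsub>G\<^esub>}. \<psi> g)"
          by (rule sum.remove[OF finN oneN])
        also have "(\<Sum>g\<in>N - {\<one>\<^bsub>G\<^esub>}. \<psi> g) = (\<Sum>g\<in>N - {\<one>\<^bsub>G\<^esub>}. c)"
          using psic by (intro sum.cong) auto
        finally show ?thesis by (simp add: p_def mult.commute)
      qed
      have "c * (1 + of_nat (card (N - {\<one>\<^bsub>G\<^esub>}))) = 0" using b b2 pc by (simp add: algebra_simps)
      then have c0: "c = 0" by (metis add_eq_0_iff_both_eq_0 mult_eq_0_iff of_nat_1 of_nat_add of_nat_eq_0_iff one_neq_zero)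
      have "Re p > 0"
      proof -
        have "Re p = (\<Sum>\<chi>\<in>A. Re (of_nat (\<alpha> \<chi>) * \<chi> \<one>\<^bsub>G\<^esub>))" unfolding p_def \<psi>_def by simp
        also have "\<dots> > 0"
        proof (rule sum_pos[OF Afin assms(4)])
          fix \<chi> assume chiA: "\<chi> \<in> A"
          obtain d where d: "d > 0" "\<chi> \<one>\<^bsub>G\<^esub> = of_nat d" using Irr_one[OF grp] chiA assms(5) by blast
          have a0: "\<alpha> \<chi> > 0" using \<alpha> chiA by blast
          show "0 < Re (of_nat (\<alpha> \<chi>) * \<chi> \<one>\<^bsub>G\<^esub>)" unfolding d(2) using d(1) a0 by simp
        qed
        finally show ?thesis .
      qed
      then show False using pc c0 by simp
    qed
  qed
qed

end
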